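(* Let $T$ be a rooted tree (of arbitrary degree) stored in light-first order with respect to some space-filling curve, and let $\hat T$ be the virtual tree obtained from $T$ by the transformation described in the context. If every vertex of $\hat T$ is stored in the same processor as in $T$, then $\hat T$ is also stored in light-first order.
   Context: Processors sit on the cells of a 2D grid enumerated by a space-filling curve; vertex $v$ is stored at position $p_v$. For a rooted tree (real or virtual), $s(v)$ is the size of the subtree rooted at $v$; the tree is stored in light-first order if for every vertex $v$, its children can be indexed $u_1,\dots,u_m$ with $s(u_1)\le\dots\le s(u_m)$ so that $u_i$ is stored at position $p_v+1+\sum_{j<i}s(u_j)$. Virtual tree: every vertex $v$ carries an ordered list $C(v)$ of current children, initially the children of $v$ in $T$ listed in light-first order (nondecreasing subtree size, i.e. increasing position), and an ordered list $A(v)$ of appended children, initially empty. The children of $v$ in the virtual tree are the elements of $C(v)$ followed by those of $A(v)$. $\textsc{Transform}(v)$, for $C(v)=(c_1,\dots,c_d)$ and $A(v)=(a_1,\dots,a_{d'})$: (1) set $A(c_1):=(c_2,\dots,c_{\lfloor d/2\rfloor})$ and $A(c_{\lfloor d/2\rfloor+1}):=(c_{\lfloor d/2\rfloor+2},\dots,c_d)$, and set $C(v):=(c_1,c_{\lfloor d/2\rfloor+1})$; (2) set $A(a_1):=(a_2,\dots,a_{\lfloor d'/2\rfloor})$ and $A(a_{\lfloor d'/2\rfloor+1}):=(a_{\lfloor d'/2\rfloor+2},\dots,a_{d'})$, and set $A(v):=(a_1,a_{\lfloor d'/2\rfloor+1})$; (3) apply $\textsc{Transform}$ to $c_1$, $c_{\lfloor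 d/2\rfloor+1}$, $a_1$ and $a_{\lfloor d'/2\rfloor+1}$. (Index ranges with upper end below lower end are empty, repeated entries are listed once, and nonexistent elements are ignored.) $\hat T$ starts equal to $T$ and is transformed by applying $\textsc{Transform}$ starting from the root; the result is a virtual tree in which each vertex has at most 4 children. *)

theory Defs
  imports Main "HOL-Library.Multiset"
begin

datatype 'v rtree = Node 'v "'v rtree list"

fun root :: "'v rtree \<Rightarrow> 'v" where
  "root (Node v ts) = v"

fun tsize :: "'v rtree \<Rightarrow> nat" where
  "tsize (Node v ts) = 1 + sum_list (map tsize ts)"

fun vertices :: "'v rtree \<Rightarrow> 'v list" where
  "vertices (Node v ts) = v # concat (map vertices ts)"

fun subtrees :: "'v rtree \<Rightarrow> 'v rtree list" where
  "subtrees (Node v ts) = Node v ts # concat (map subtrees ts)"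

definition light_first :: "('v \<Rightarrow> nat) \<Rightarrow> 'v rtree \<Rightarrow> bool" where
  "light_first p t \<longleftrightarrow>
     (\<forall>v ts. Node v ts \<in> set (subtrees t) \<longrightarrow>
        (\<exists>us. mset us = mset ts \<and> sorted (map tsize us) \<and>
           (\<forall>i < length us. p (root (us ! i)) = p v + 1 + sum_list (map tsize (take i us)))))"

text \<open>Virtual trees: vertex v with current children C(v) and appended children A(v).\<close>
datatype 'v vtree = VNode 'v "'v vtree list" "'v vtree list"

fun vroot :: "'v vtree \<Rightarrow> 'v" where
  "vroot (VNode v cs as) = v"

fun vsize :: "'v vtree \<Rightarrow> nat" where
  "vsize (VNode v cs as) = 1 + sum_list (map vsize cs) + sum_list (map vsize as)"

fun setA :: "'v vtree \<Rightarrow> 'v vtree list \<Rightarrow> 'v vtree" where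
  "setA (VNode v cs as) as' = VNode v cs as'"

text \<open>One halving step on a list (c_1,...,c_d): set A(c_1) := (c_2..c_{d div 2}),
  A(c_{d div 2 + 1}) := (c_{d div 2 + 2} .. c_d), and keep (c_1, c_{d div 2 + 1})
  (listed once if equal, omitted if nonexistent).\<close>
definition halve :: "'v vtree list \<Rightarrow> 'v vtree list" where
  "halve cs = (let d = length cs; h = d div 2 in
     if d = 0 then []
     else if d = 1 then [setA (cs ! 0) []]
     else [setA (cs ! 0) (take (h - 1) (drop 1 cs)), setA (cs ! h) (drop (Suc h) cs)])"

lemma sum_take_le: "sum_list (map (f::'a \<Rightarrow> nat) (take k xs)) \<le> sum_list (map f xs)"
proof -
  have "sum_list (map f xs) = sum_list (map f (take k xs)) + sum_list (map f (drop k xs))"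
    by (metis append_take_drop_id map_append sum_list_append)
  then show ?thesis by simp
qed

lemma sum_drop_le: "sum_list (map (f::'a \<Rightarrow> nat) (drop k xs)) \<le> sum_list (map f xs)"
proof -
  have "sum_list (map f xs) = sum_list (map f (take k xs)) + sum_list (map f (drop k xs))"
    by (metis append_take_drop_id map_append sum_list_append)
  then show ?thesis by simp
qed

lemma vsize_setA: "vsize (setA t L) \<le> vsize t + sum_list (map vsize L)"
  by (cases t) simp

lemma halve_size:
  assumes "x \<in> set (halve cs)"
  shows "vsize x \<le> sum_list (map vsize cs)"
proof -
  consider "length cs = 1" | "length cs \<ge> 2" | "length cs = 0" by linarith
  then show ?thesis
  proof cases
    case 1
    then obtain c where cs: "cs = [c]" by (metis One_nat_def length_0_conv length_Suc_conv)
    then have "x = setA c []" using assms by (simp add: halve_def)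
    then show ?thesis using vsize_setA[of c "[]"] cs by simp
  next
    case 3 then show ?thesis using assms by (simp add: halve_def)
  next
    case 2
    define h where "h = length cs div 2"
    have hl: "h < length cs" "h \<ge> 1" using 2 by (auto simp: h_def)
    obtain c rest where cs: "cs = c # rest" using 2 by (cases cs) auto
    have hv: "halve cs = [setA (cs!0) (take (h-1) (drop 1 cs)), setA (cs!h) (drop (Suc h) cs)]"
      using 2 unfolding halve_def h_def Let_def by auto
    have x: "x = setA c (take (h - 1) rest) \<or> x = setA (cs ! h) (drop (Suc h) cs)"
      using assms hv cs by auto
    have d: "drop h cs = cs ! h # drop (Suc h) cs" using hl by (simp add: Cons_nth_drop_Suc)
    show ?thesis
    proof (rule disjE[OF x])
      assume "x = setA c (take (h - 1) rest)"
      then show ?thesis using vsize_setA[of c "take (h-1) rest"] sum_take_le[of vsize "h-1" rest] cs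
        by simp
    next
      assume "x = setA (cs ! h) (drop (Suc h) cs)"
      moreover have "vsize (cs ! h) + sum_list (map vsize (drop (Suc h) cs)) \<le> sum_list (map vsize cs)"
        using sum_drop_le[of vsize h cs] d by simp
      ultimately show ?thesis using vsize_setA[of "cs ! h" "drop (Suc h) cs"] by (metis order_trans)
    qed
  qed
qed

function transform :: "'v vtree \<Rightarrow> 'v vtree" where
  "transform (VNode v cs as) = VNode v (map transform (halve cs)) (map transform (halve as))"
  by pat_completeness auto
termination
proof (relation "measure vsize")
  show "wf (measure vsize)" by simp
next
  fix v cs as x
  assume "x \<in> set (halve cs)"
  then show "(x, VNode v cs as) \<in> measure vsize" using halve_size[of x cs] by simp
next
  fix v cs as x
  assume "x \<in> set (halve as)"
  then show "(x, VNode v cs as) \<in> measure vsize" using halve_size[of x as] by simp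
qed

text \<open>Initial virtual tree: C(v) = children of v in T in increasing position
  (= light-first order), A(v) empty.\<close>
fun init_vtree :: "('v \<Rightarrow> nat) \<Rightarrow> 'v rtree \<Rightarrow> 'v vtree" where
  "init_vtree p (Node v ts) = VNode v (sort_key (\<lambda>t. p (vroot t)) (map (init_vtree p) ts)) []"

fun to_rtree :: "'v vtree \<Rightarrow> 'v rtree" where
  "to_rtree (VNode v cs as) = Node v (map to_rtree cs @ map to_rtree as)"

definition virtual_tree :: "('v \<Rightarrow> nat) \<Rightarrow> 'v rtree \<Rightarrow> 'v rtree" where
  "virtual_tree p T = to_rtree (transform (init_vtree p T))"

end

theory Submission
  imports Defs
begin


lemma vroot_init[simp]: "vroot (init_vtree p t) = root t"
  by (cases t) simp

lemma sum_sort_key[simp]: "sum_list (map (g::'a\<Rightarrow>nat) (sort_key f xs)) = sum_list (map g xs)"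
  by (metis mset_map mset_sort sum_mset_sum_list)

lemma vsize_init[simp]: "vsize (init_vtree p t) = tsize t"
  by (induction t) (simp_all add: comp_def cong: map_cong)

lemma tsize_to_rtree[simp]: "tsize (to_rtree x) = vsize x"
  by (induction x) (simp_all add: comp_def cong: map_cong)

lemma root_to_rtree[simp]: "root (to_rtree x) = vroot x"
  by (cases x) simp

lemma vroot_transform[simp]: "vroot (transform x) = vroot x"
  by (cases x) simp

lemma vroot_setA[simp]: "vroot (setA x L) = vroot x"
  by (cases x) simp

definition rootc :: "('v \<Rightarrow> nat) \<Rightarrow> 'v \<Rightarrow> 'v rtree list \<Rightarrow> bool" where
  "rootc p v ts \<longleftrightarrow> (\<exists>us. mset us = mset ts \<and> sorted (map tsize us) \<and>
           (\<forall>i < length us. p (root (us ! i)) = p v + 1 + sum_list (map tsize (take i us))))"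

lemma light_first_Node:
  "light_first p (Node v ts) \<longleftrightarrow> rootc p v ts \<and> (\<forall>t\<in>set ts. light_first p t)"
proof
  assume H: "light_first p (Node v ts)"
  have "rootc p v ts" using H unfolding light_first_def rootc_def by simp
  moreover have "light_first p t" if "t \<in> set ts" for t
    using H that unfolding light_first_def by auto
  ultimately show "rootc p v ts \<and> (\<forall>t\<in>set ts. light_first p t)" by blast
next
  assume H: "rootc p v ts \<and> (\<forall>t\<in>set ts. light_first p t)"
  show "light_first p (Node v ts)"
    unfolding light_first_def
  proof (intro allI impI)
    fix v' ts' assume "Node v' ts' \<in> set (subtrees (Node v ts))"
    then consider "Node v' ts' = Node v ts" | t where "t \<in> set ts" "Node v' ts' \<in> set (subtrees t)"
      by auto
    then show "\<exists>us. mset us = mset ts' \<and> sorted (map tsize us) \<and>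
           (\<forall>i < length us. p (root (us ! i)) = p v' + 1 + sum_list (map tsize (take i us)))"
    proof cases
      case 1 then show ?thesis using H unfolding rootc_def by simp
    next
      case 2 then show ?thesis using H unfolding light_first_def by blast
    qed
  qed
qed

definition SP :: "('v \<Rightarrow> nat) \<Rightarrow> nat \<Rightarrow> 'v vtree list \<Rightarrow> bool" where
  "SP p b L \<longleftrightarrow> sorted (map vsize L) \<and>
     (\<forall>i<length L. p (vroot (L!i)) = b + sum_list (map vsize (take i L)))"

definition Seg :: "('v \<Rightarrow> nat) \<Rightarrow> nat \<Rightarrow> 'v vtree list \<Rightarrow> bool" where
  "Seg p b L \<longleftrightarrow> (\<forall>y\<in>set L. \<exists>t. y = init_vtree p t \<and> light_first p t) \<and> SP p b L"

fun G :: "('v \<Rightarrow> nat) \<Rightarrow> 'v vtree \<Rightarrow> bool" where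
  "G p (VNode v cs as) \<longleftrightarrow> Seg p (p v + 1) (cs @ as) \<and>
     (as \<noteq> [] \<longrightarrow> sum_list (map vsize cs) \<le> vsize (hd as))"

lemma SP_take: "SP p b L \<Longrightarrow> SP p b (take k L)"
  unfolding SP_def by (auto simp: sorted_wrt_take take_map[symmetric] min_def)

lemma SP_drop: "SP p b L \<Longrightarrow> SP p (b + sum_list (map vsize (take k L))) (drop k L)"
  unfolding SP_def
proof (intro conjI allI impI)
  assume H: "sorted (map vsize L) \<and> (\<forall>i<length L. p (vroot (L ! i)) = b + sum_list (map vsize (take i L)))"
  then show "sorted (map vsize (drop k L))" by (metis drop_map sorted_wrt_drop)
  fix i assume i: "i < length (drop k L)"
  have "take (k + i) L = take k L @ take i (drop k L)" by (simp add: take_add)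
  then show "p (vroot (drop k L ! i)) = b + sum_list (map vsize (take k L)) + sum_list (map vsize (take i (drop k L)))"
    using H i by (auto simp: add.commute)
qed

lemma Seg_take: "Seg p b L \<Longrightarrow> Seg p b (take k L)"
  unfolding Seg_def using SP_take by (metis in_set_takeD)

lemma Seg_drop: "Seg p b L \<Longrightarrow> Seg p (b + sum_list (map vsize (take k L))) (drop k L)"
  unfolding Seg_def using SP_drop by (metis in_set_dropD)

lemma SP_append:
  assumes "SP p b L1" "SP p (b + sum_list (map vsize L1)) L2" "sorted (map vsize (L1 @ L2))"
  shows "SP p b (L1 @ L2)"
  unfolding SP_def
proof (intro conjI allI impI)
  show "sorted (map vsize (L1 @ L2))" by fact
  fix i assume i: "i < length (L1 @ L2)"
  show "p (vroot ((L1 @ L2) ! i)) = b + sum_list (map vsize (take i (L1 @ L2)))"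
  proof (cases "i < length L1")
    case True then show ?thesis using assms(1) unfolding SP_def by (simp add: nth_append)
  next
    case False
    then show ?thesis using assms(2) i unfolding SP_def by (auto simp: nth_append)
  qed
qed


lemma strict_pos:
  assumes "\<forall>i<length xs. f (xs!i) = (b::nat) + sum_list (map w (take i xs))" "\<forall>x\<in>set xs. w x > (0::nat)"
  shows "sorted_wrt (<) (map f xs)"
proof -
  have "f (xs!i) < f (xs!j)" if "i < j" "j < length xs" for i j
  proof -
    obtain k where j: "j = i + Suc k" using \<open>i<j\<close> less_iff_Suc_add by auto
    have il: "i < length xs" using that by simp
    have "take j xs = take i xs @ take (Suc k) (drop i xs)" unfolding j by (rule take_add)
    also have "take (Suc k) (drop i xs) = xs!i # take k (drop (Suc i) xs)"
      using il by (metis Cons_nth_drop_Suc take_Suc_Cons)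
    finally have "sum_list (map w (take j xs)) = sum_list (map w (take i xs)) + w (xs!i) + sum_list (map w (take k (drop (Suc i) xs)))" by simp
    moreover have "w (xs!i) > 0" using assms(2) il by simp
    moreover have "f (xs!i) = b + sum_list (map w (take i xs))" "f (xs!j) = b + sum_list (map w (take j xs))"
      using assms(1) il that by blast+
    ultimately show ?thesis by linarith
  qed
  then show ?thesis by (simp add: sorted_wrt_iff_nth_less)
qed
lemma K:
  assumes "light_first p (Node a ts)"
  defines "cs' \<equiv> sort_key (\<lambda>t. p (vroot t)) (map (init_vtree p) ts)"
  shows "Seg p (p a + 1) cs'" "sum_list (map vsize cs') + 1 = tsize (Node a ts)"
proof -
  from assms(1) have R: "rootc p a ts" and LF: "\<forall>t\<in>set ts. light_first p t"
    by (simp_all add: light_first_Node)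
  then obtain us where us: "mset us = mset ts" "sorted (map tsize us)"
    "\<forall>i < length us. p (root (us ! i)) = p a + 1 + sum_list (map tsize (take i us))"
    unfolding rootc_def by blast
  define ys where "ys = map (init_vtree p) us"
  define f where "f = (\<lambda>t. p (vroot t))"
  have tpos: "tsize t > 0" for t :: "'a rtree" by (cases t) simp
  have ysc: "map vsize ys = map tsize us" unfolding ys_def by simp
  have SPy: "SP p (p a + 1) ys" unfolding SP_def
    using us(2,3) by (simp add: ysc ys_def take_map comp_def)
  have "sorted_wrt (<) (map f ys)"
    using SPy tpos unfolding SP_def f_def ys_def
    by (intro strict_pos[where w=vsize and b="p a + 1"]) auto
  then have fy: "sorted (map f ys)" "distinct (map f ys)" by (auto simp: strict_sorted_iff)
  have ms: "mset (map (init_vtree p) ts) = mset ys" unfolding ys_def by (simp add: us(1))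
  have mcs: "mset cs' = mset ys" unfolding cs'_def using ms by simp
  have setc: "set cs' = set ys" using mcs by (metis set_mset_mset)
  have fc1: "sorted (map f cs')" unfolding cs'_def f_def by (simp add: sorted_sort_key)
  have "mset (map f cs') = mset (map f ys)" using mcs by simp
  then have fc2: "distinct (map f cs')" using fy(2)
    by (metis card_distinct distinct_card length_map mset_eq_length mset_eq_setD)
  have inj: "inj_on f (set cs' \<union> set ys)" using fy(2) setc by (simp add: distinct_map)
  have eq: "cs' = ys" using map_sorted_distinct_set_unique[OF inj fc1 fc2 fy setc] .
  show "Seg p (p a + 1) cs'" unfolding Seg_def eq
    using SPy LF us(1) by (auto simp: ys_def dest: mset_eq_setD)
  show "sum_list (map vsize cs') + 1 = tsize (Node a ts)"
    unfolding cs'_def by (simp add: comp_def)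
qed

lemma half_sum:
  assumes "sorted (map (w::'a\<Rightarrow>nat) L)" "2*h \<le> length L"
  shows "sum_list (map w (take h L)) \<le> sum_list (map w (drop h L))"
proof -
  have hl: "h \<le> length L" "h \<le> length L - h" using assms(2) by auto
  have "sum_list (map w (take h L)) = (\<Sum>i<h. w (L!i))"
    using hl by (simp add: sum_list_sum_nth lessThan_atLeast0 min_absorb1)
  also have "\<dots> \<le> (\<Sum>i<h. w (L!(h+i)))"
  proof (rule sum_mono)
    fix i assume "i \<in> {..<h}"
    then show "w (L!i) \<le> w (L!(h+i))" using assms
      by (auto simp: sorted_iff_nth_mono)
  qed
  also have "\<dots> = sum_list (map w (take h (drop h L)))"
    using hl by (simp add: sum_list_sum_nth lessThan_atLeast0 min_absorb1 add.commute)
  also have "\<dots> \<le> sum_list (map w (drop h L))" by (rule sum_take_le)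
  finally show ?thesis .
qed



lemma Seg_init: "Seg p b L \<Longrightarrow> y \<in> set L \<Longrightarrow> \<exists>t. y = init_vtree p t \<and> light_first p t"
  unfolding Seg_def by blast

lemma Seg_append:
  assumes "Seg p b L1" "Seg p (b + sum_list (map vsize L1)) L2" "sorted (map vsize (L1 @ L2))"
  shows "Seg p b (L1 @ L2)"
  using assms SP_append unfolding Seg_def by auto

lemma Child:
  assumes S: "Seg p b (c # rest)"
  shows "G p (setA c (take m rest))"
    "vsize (setA c (take m rest)) = vsize c + sum_list (map vsize (take m rest))"
proof -
  obtain t where t: "c = init_vtree p t" "light_first p t" using Seg_init[OF S] by auto
  obtain a ts where ta: "t = Node a ts" by (cases t)
  define cs' where "cs' = sort_key (\<lambda>t. p (vroot t)) (map (init_vtree p) ts)"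
  define X where "X = take m rest"
  have K1: "Seg p (p a + 1) cs'" and K2: "sum_list (map vsize cs') + 1 = tsize (Node a ts)"
    using K[of p a ts] t ta unfolding cs'_def by auto
  have c: "c = VNode a cs' []" unfolding cs'_def using t ta by simp
  have vc: "vsize c = sum_list (map vsize cs') + 1" using K2 t ta by (simp add: comp_def)
  have "p (vroot ((c # rest) ! 0)) = b + sum_list (map vsize (take 0 (c # rest)))"
    using S unfolding Seg_def SP_def by blast
  then have pa: "p a = b" unfolding c by simp
  have "Seg p (b + vsize c) rest" using Seg_drop[OF S, of 1] by simp
  then have SX: "Seg p (b + vsize c) X" unfolding X_def by (rule Seg_take)
  have srt: "sorted (map vsize (c # rest))" using S unfolding Seg_def SP_def by simp
  have Xge: "\<forall>y\<in>set X. vsize c \<le> vsize y" using srt unfolding X_def by (auto dest: in_set_takeD)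
  have cle: "\<forall>x\<in>set cs'. vsize x < vsize c" using vc member_le_sum_list[of _ "map vsize cs'"] by force
  have srt2: "sorted (map vsize (cs' @ X))"
  proof -
    have "sorted (map vsize cs')" using K1 unfolding Seg_def SP_def by simp
    moreover have "sorted (map vsize X)" using SX unfolding Seg_def SP_def by simp
    ultimately show ?thesis using Xge cle by (force simp: sorted_append)
  qed
  have "Seg p (p a + 1) (cs' @ X)"
    by (rule Seg_append[OF K1 _ srt2]) (use SX vc pa in simp)
  moreover have "X \<noteq> [] \<longrightarrow> sum_list (map vsize cs') \<le> vsize (hd X)"
    using Xge vc by (metis hd_in_set Suc_eq_plus1 Suc_le_eq less_imp_le)
  ultimately show "G p (setA c (take m rest))" unfolding X_def[symmetric] c by simp
  show "vsize (setA c (take m rest)) = vsize c + sum_list (map vsize (take m rest))"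
    unfolding c by simp
qed


lemma SP_pos: "SP p b L \<Longrightarrow> i < length L \<Longrightarrow> p (vroot (L!i)) = b + sum_list (map vsize (take i L))"
  unfolding SP_def by blast

lemma Halve:
  assumes S: "Seg p b L"
  shows "\<forall>y\<in>set (halve L). G p y" "SP p b (halve L)"
    "sum_list (map vsize (halve L)) = sum_list (map vsize L)"
    "L \<noteq> [] \<Longrightarrow> \<forall>y\<in>set (halve L). vsize (hd L) \<le> vsize y"
proof -
  have SPL: "SP p b L" using S unfolding Seg_def by simp
  consider "L = []" | c where "L = [c]" | c rest where "L = c # rest" "rest \<noteq> []"
    by (metis list.exhaust)
  then have "(\<forall>y\<in>set (halve L). G p y) \<and> SP p b (halve L) \<and>
    sum_list (map vsize (halve L)) = sum_list (map vsize L) \<and>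
    (L \<noteq> [] \<longrightarrow> (\<forall>y\<in>set (halve L). vsize (hd L) \<le> vsize y))"
  proof cases
    case 1 then show ?thesis by (simp add: halve_def SP_def)
  next
    case 2
    have h: "halve L = [setA c (take 0 [])]" using 2 by (simp add: halve_def)
    have C: "G p (setA c (take 0 []))" "vsize (setA c (take 0 [])) = vsize c"
      using Child[of p b c "[]" 0] S 2 by auto
    have "p (vroot c) = b" using SP_pos[OF SPL, of 0] 2 by simp
    then show ?thesis using C 2 unfolding h by (auto simp: SP_def)
  next
    case 3
    define h where "h = length L div 2"
    have hl: "h \<ge> 1" "h < length L" "2 * h \<le> length L" proof -
      have "length rest \<ge> 1" using 3 by (cases rest) auto
      then show "h \<ge> 1" "h < length L" "2 * h \<le> length L" using 3 by (auto simp: h_def)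
    qed
    define y1 where "y1 = setA c (take (h - 1) rest)"
    define y2 where "y2 = setA (L!h) (take (length L) (drop (Suc h) L))"
    have hv: "halve L = [y1, y2]"
      using 3 hl unfolding halve_def y1_def y2_def h_def Let_def by auto
    have C1: "G p y1" "vsize y1 = vsize c + sum_list (map vsize (take (h - 1) rest))"
      using Child[of p b c rest "h - 1"] S 3 unfolding y1_def by auto
    have tkh: "take h L = c # take (h - 1) rest" using 3 hl by (cases h) auto
    have v1: "vsize y1 = sum_list (map vsize (take h L))" using C1(2) tkh by simp
    have dh: "drop h L = L!h # drop (Suc h) L" using hl by (simp add: Cons_nth_drop_Suc)
    have S2: "Seg p (b + sum_list (map vsize (take h L))) (L!h # drop (Suc h) L)"
      using Seg_drop[OF S, of h] dh by simp
    have C2: "G p y2" "vsize y2 = vsize (L!h) + sum_list (map vsize (take (length L) (drop (Suc h) L)))"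
      using Child[OF S2, of "length L"] unfolding y2_def by auto
    have v2: "vsize y2 = sum_list (map vsize (drop h L))" using C2(2) dh by simp
    have srt: "sorted (map vsize L)" using SPL unfolding SP_def by simp
    have le12: "vsize y1 \<le> vsize y2" using v1 v2 half_sum[OF srt hl(3)] by simp
    have sum: "vsize y1 + vsize y2 = sum_list (map vsize L)"
      using v1 v2 by (metis append_take_drop_id map_append sum_list_append)
    have p1: "p (vroot y1) = b" using SP_pos[OF SPL, of 0] 3 unfolding y1_def by simp
    have p2: "p (vroot y2) = b + vsize y1" using SP_pos[OF SPL, of h] hl v1 unfolding y2_def by simp
    have SPh: "SP p b [y1, y2]" unfolding SP_def
    proof (intro conjI allI impI)
      show "sorted (map vsize [y1, y2])" using le12 by simp
      fix i assume "i < length [y1, y2]"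
      then have "i = 0 \<or> i = 1" by auto
      then show "p (vroot ([y1, y2] ! i)) = b + sum_list (map vsize (take i [y1, y2]))"
        using p1 p2 by auto
    qed
    have ge1: "vsize (hd L) \<le> vsize y1" using C1(2) 3 by simp
    show ?thesis unfolding hv using C1(1) C2(1) SPh sum ge1 le12 by auto
  qed
  then show "\<forall>y\<in>set (halve L). G p y" "SP p b (halve L)"
    "sum_list (map vsize (halve L)) = sum_list (map vsize L)"
    "L \<noteq> [] \<Longrightarrow> \<forall>y\<in>set (halve L). vsize (hd L) \<le> vsize y" by blast+
qed


lemma map_vsize_tr: "(\<forall>y\<in>set H. vsize (transform y) = vsize y) \<Longrightarrow>
  map tsize (map (to_rtree \<circ> transform) H) = map vsize H"
  by (induction H) auto

lemma Main:
  "G p x \<Longrightarrow> light_first p (to_rtree (transform x)) \<and> vsize (transform x) = vsize x"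
proof (induction x rule: transform.induct)
  case (1 v cs as)
  have S: "Seg p (p v + 1) (cs @ as)" and hdc: "as \<noteq> [] \<longrightarrow> sum_list (map vsize cs) \<le> vsize (hd as)"
    using "1.prems" by auto
  have Sc: "Seg p (p v + 1) cs" using Seg_take[OF S, of "length cs"] by simp
  have Sa: "Seg p (p v + 1 + sum_list (map vsize cs)) as" using Seg_drop[OF S, of "length cs"] by simp
  define Hc where "Hc = halve cs"
  define Ha where "Ha = halve as"
  note hc = Halve[OF Sc, folded Hc_def]
  note ha = Halve[OF Sa, folded Ha_def]
  have IHc: "\<forall>y\<in>set Hc. light_first p (to_rtree (transform y)) \<and> vsize (transform y) = vsize y"
    using "1.IH"(1) hc(1) unfolding Hc_def by blast
  have IHa: "\<forall>y\<in>set Ha. light_first p (to_rtree (transform y)) \<and> vsize (transform y) = vsize y"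
    using "1.IH"(2) ha(1) unfolding Ha_def by blast
  define ts where "ts = map (to_rtree \<circ> transform) (Hc @ Ha)"
  have tr: "to_rtree (transform (VNode v cs as)) = Node v ts"
    unfolding ts_def Hc_def Ha_def by simp
  have mts: "map tsize ts = map vsize (Hc @ Ha)"
    unfolding ts_def using map_vsize_tr[of "Hc @ Ha"] IHc IHa by auto
  have srt: "sorted (map vsize (Hc @ Ha))"
  proof -
    have "vsize x \<le> vsize y" if "x \<in> set Hc" "y \<in> set Ha" for x y
    proof -
      have "as \<noteq> []" using that(2) unfolding Ha_def by (auto simp: halve_def)
      have "vsize x \<le> sum_list (map vsize cs)"
        using hc(3) that(1) member_le_sum_list[of "vsize x" "map vsize Hc"] by simp
      also have "\<dots> \<le> vsize (hd as)" using hdc \<open>as \<noteq> []\<close> by simp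
      also have "\<dots> \<le> vsize y" using ha(4) \<open>as \<noteq> []\<close> that(2) by blast
      finally show ?thesis .
    qed
    then show ?thesis using hc(2) ha(2) unfolding SP_def by (auto simp: sorted_append)
  qed
  have SPH: "SP p (p v + 1) (Hc @ Ha)"
    by (rule SP_append[OF hc(2) _ srt]) (use ha(2) hc(3) in simp)
  have rc: "rootc p v ts" unfolding rootc_def
  proof (intro exI[of _ ts] conjI allI impI)
    show "sorted (map tsize ts)" using mts srt by simp
    fix i assume i: "i < length ts"
    have "root (ts ! i) = vroot ((Hc @ Ha) ! i)" using i unfolding ts_def by (simp del: map_append add: map_append[symmetric])
    have "map tsize (take i ts) = take i (map vsize (Hc @ Ha))"
      using mts by (metis take_map)
    then have e1: "sum_list (map tsize (take i ts)) = sum_list (map vsize (take i (Hc @ Ha)))"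
      by (metis take_map)
    have il: "i < length (Hc @ Ha)" using i unfolding ts_def by simp
    show "p (root (ts ! i)) = p v + 1 + sum_list (map tsize (take i ts))"
      using SP_pos[OF SPH il] e1 \<open>root (ts ! i) = vroot ((Hc @ Ha) ! i)\<close> by simp
  qed simp
  have lf: "\<forall>t\<in>set ts. light_first p t" unfolding ts_def using IHc IHa by auto
  have "vsize (transform (VNode v cs as)) = vsize (VNode v cs as)"
  proof -
    have "map vsize (map transform Hc) = map vsize Hc" using IHc by simp
    moreover have "map vsize (map transform Ha) = map vsize Ha" using IHa by simp
    ultimately show ?thesis using hc(3) ha(3) unfolding Hc_def Ha_def
      by (simp del: map_map add: map_map[symmetric])
  qed
  then show ?case using tr rc lf light_first_Node by metis
qed

theorem mainTheorem5:
  fixes T :: "'v rtree" and p :: "'v \<Rightarrow> nat"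
  assumes "distinct (vertices T)"
    and "light_first p T"
  shows "light_first p (virtual_tree p T)"
proof -
  have S: "Seg p (p (root T)) [init_vtree p T]"
    using assms(2) unfolding Seg_def SP_def by auto
  have "G p (setA (init_vtree p T) (take 0 []))" using Child[OF S] by simp
  moreover have "setA (init_vtree p T) (take 0 []) = init_vtree p T" by (cases T) simp
  ultimately have "G p (init_vtree p T)" by simp
  then show ?thesis unfolding virtual_tree_def using Main by blast
qed

end
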